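(* Let $A$ be a finite nonempty alphabet and $\zeta:A^\omega\to A^\omega$ a bijective $\omega$-sequential function. Then for every $n\ge0$ the map $\epsilon:A^n\to A^n$, $u\mapsto\zeta(ux)[0,n]$ (independent of $x\in A^\omega$), is a bijection.
   Context: For an infinite word $z$, $z[0,n]$ denotes its prefix of length $n$. A map $\zeta:A^\omega\to A^\omega$ is $\omega$-sequential if whenever a finite word $u$ is a common prefix of $x$ and $y$, then $\zeta(x)[0,|u|]=\zeta(y)[0,|u|]$. *)

theory Defs
  imports Main "HOL-Library.Omega_Words_Fun"
begin

definition omega_sequential :: "('a word \<Rightarrow> 'a word) \<Rightarrow> bool" where
  "omega_sequential \<zeta> \<longleftrightarrow>
     (\<forall>(u::'a list) x y. prefix (length u) x = u \<and> prefix (length u) y = u \<longrightarrow>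
        prefix (length u) (\<zeta> x) = prefix (length u) (\<zeta> y))"

end

theory Submission
  imports Defs
begin

theorem lemma4p5:
  fixes \<zeta> :: "('a::finite) word \<Rightarrow> 'a word"
  assumes "bij \<zeta>" and "omega_sequential \<zeta>"
  shows "(\<forall>u x y. length u = n \<longrightarrow> prefix n (\<zeta> (u \<frown> x)) = prefix n (\<zeta> (u \<frown> y)))
       \<and> (\<forall>x. bij_betw (\<lambda>u. prefix n (\<zeta> (u \<frown> x))) {u. length u = n} {u. length u = n})"
proof -
  have P1: "prefix n (\<zeta> (u \<frown> x)) = prefix n (\<zeta> (u \<frown> y))" if "length u = n" for u x y
    using assms(2) that unfolding omega_sequential_def
    by (metis prefix_conc_length)
  have fin: "finite {u::'a list. length u = n}"
    using finite_lists_length_eq[OF finite_UNIV] by simp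
  have "bij_betw (\<lambda>u. prefix n (\<zeta> (u \<frown> x))) {u. length u = n} {u. length u = n}" for x
  proof -
    let ?f = "\<lambda>u. prefix n (\<zeta> (u \<frown> x))"
    have im: "?f ` {u. length u = n} = {u. length u = n}"
    proof
      show "?f ` {u. length u = n} \<subseteq> {u. length u = n}" by auto
    next
      show "{u. length u = n} \<subseteq> ?f ` {u. length u = n}"
      proof
        fix v :: "'a list" assume v: "v \<in> {u. length u = n}"
        obtain w where w: "\<zeta> w = v \<frown> x" using assms(1) by (metis bij_pointE)
        have "?f (prefix n w) = prefix n (\<zeta> (prefix n w \<frown> suffix n w))"
          using P1[of "prefix n w" x "suffix n w"] by simp
        also have "\<dots> = v" using w v by (simp flip: prefix_suffix)
        finally show "v \<in> ?f ` {u. length u = n}" by force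
      qed
    qed
    then have "inj_on ?f {u. length u = n}"
      using fin by (intro eq_card_imp_inj_on) auto
    with im show ?thesis by (simp add: bij_betw_def)
  qed
  with P1 show ?thesis by blast
qed

end
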